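(* Let $d,s,t,\ell$ be nonnegative integers with $s\ge 1$, $d \geq 3t-5$ and $t \geq \max\{4, \ell+3\}$, and let $\theta_{t,\ell}\in\Theta_{t,\ell}$. For any three edges of $W_d(s)$, the number of subgraphs of $W_d(s)$ isomorphic to $\theta_{t,\ell}$ that contain at least two of these three edges and contain exactly one hub vertex of $W_d(s)$ is at most \[ N= \begin{cases} \max\{s(t-2),\, t-1\}, & \text{if } \mathbf{X}(\theta_{t,\ell}) \text{ is symmetric},\\ \max\{2s(t-2),\, 2(t-1)\}, & \text{if } \mathbf{X}(\theta_{t,\ell}) \text{ is asymmetric}. \end{cases} \]
   Context: For $d \ge 3$ and $s \ge 1$, the $s$-hubbed wheel $W_d(s) = \overline{K_s} + C_d$ has vertex set $\{u_1,\dots,u_s\} \cup \{v_1,\dots,v_d\}$, where $v_1v_2\cdots v_dv_1$ is a cycle, the hub vertices $u_1,\dots,u_s$ are pairwise non-adjacent, and every $u_a$ is adjacent to every $v_i$. Edges $u_av_i$ are spokes; edges $v_iv_{i+1}$ (indices mod $d$) are rim edges. For $t\ge 3$ and $0 \le \ell \le t-3$, $\Theta_{t,\ell}$ is the class of graphs $\theta_{t,\ell}$ obtained from a cycle $v_1v_2\cdots v_tv_1$ by adding exactly $\ell$ chords $v_1v_{i_1},\dots,v_1v_{i_\ell}$ with $2<i_1<\cdots<i_\ell<t$. Its vector is $\mathbf{X}(\theta_{t,\ell}) = (2, i_1, \dots, i_\ell, t)$. The graph (or its vector) is symmetric if $\ell = 0$ or $i_j + i_{\ell+1-j} = t+2$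 for every $j \le (\ell+1)/2$, and asymmetric otherwise. *)

theory Defs
  imports Main
begin

(* Simple graphs: a vertex set V and a set E of 2-element vertex subsets. *)

(* s-hubbed wheel W_d(s): hubs u_a = Inl a (1 <= a <= s), rim v_i = Inr i (1 <= i <= d) *)
definition wheel_hubs :: "nat \<Rightarrow> (nat + nat) set" where
  "wheel_hubs s = Inl ` {1..s}"

definition wheel_rim :: "nat \<Rightarrow> (nat + nat) set" where
  "wheel_rim d = Inr ` {1..d}"

definition wheel_verts :: "nat \<Rightarrow> nat \<Rightarrow> (nat + nat) set" where
  "wheel_verts d s = wheel_hubs s \<union> wheel_rim d"

definition wheel_spokes :: "nat \<Rightarrow> nat \<Rightarrow> (nat + nat) set set" where
  "wheel_spokes d s = {{Inl a, Inr i} | a i. a \<in> {1..s} \<and> i \<in> {1..d}}"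

definition wheel_rim_edges :: "nat \<Rightarrow> (nat + nat) set set" where
  "wheel_rim_edges d = {{Inr i, Inr (i mod d + 1)} | i. i \<in> {1..d}}"

definition wheel_edges :: "nat \<Rightarrow> nat \<Rightarrow> (nat + nat) set set" where
  "wheel_edges d s = wheel_spokes d s \<union> wheel_rim_edges d"

(* theta_{t,l}: cycle v_1 ... v_t v_1 (vertex v_i = i) plus chords v_1 v_i for i in I,
   where I = {i_1 < ... < i_l} \<subseteq> {3..t-1} *)
definition theta_verts :: "nat \<Rightarrow> nat set" where
  "theta_verts t = {1..t}"

definition theta_edges :: "nat \<Rightarrow> nat set \<Rightarrow> nat set set" where
  "theta_edges t I = {{i, i mod t + 1} | i. i \<in> {1..t}} \<union> {{1, i} | i. i \<in> I}"

definition theta_vector :: "nat \<Rightarrow> nat set \<Rightarrow> nat list" where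
  "theta_vector t I = [2] @ sorted_list_of_set I @ [t]"

(* symmetric: l = 0 or i_j + i_{l+1-j} = t + 2 for every 1 <= j <= (l+1)/2;
   here i_j = (sorted_list_of_set I) ! (j - 1) *)
definition theta_symmetric :: "nat \<Rightarrow> nat set \<Rightarrow> bool" where
  "theta_symmetric t I =
     (let xs = sorted_list_of_set I; l = length xs in
      l = 0 \<or> (\<forall>j. 1 \<le> j \<and> 2 * j \<le> l + 1 \<longrightarrow> xs ! (j - 1) + xs ! (l - j) = t + 2))"

definition is_subgraph :: "'a set \<Rightarrow> 'a set set \<Rightarrow> 'a set \<Rightarrow> 'a set set \<Rightarrow> bool" where
  "is_subgraph V E VH EH \<longleftrightarrow> VH \<subseteq> V \<and> EH \<subseteq> E \<and> (\<forall>e\<in>EH. e \<subseteq> VH)"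

definition graph_iso :: "'a set \<Rightarrow> 'a set set \<Rightarrow> 'b set \<Rightarrow> 'b set set \<Rightarrow> bool" where
  "graph_iso V1 E1 V2 E2 \<longleftrightarrow>
     (\<exists>f. bij_betw f V1 V2 \<and>
          (\<forall>x\<in>V1. \<forall>y\<in>V1. {x, y} \<in> E1 \<longleftrightarrow> {f x, f y} \<in> E2))"

end

theory Submission
  imports Defs
begin



definition rv :: "int \<Rightarrow> int \<Rightarrow> nat + nat" where
  "rv n y = Inr (nat (y mod n) + 1)"

lemma rv_eq: "n > 0 \<Longrightarrow> rv n y = rv n z \<longleftrightarrow> y mod n = z mod n"
  unfolding rv_def by (simp add: eq_nat_nat_iff)

lemma rv_eq_dvd: "n > 0 \<Longrightarrow> rv n y = rv n z \<longleftrightarrow> n dvd (y - z)"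
  by (simp add: rv_eq mod_eq_dvd_iff)

lemma rv_neq_Inl[simp]: "rv n y \<noteq> Inl a" "Inl a \<noteq> rv n y"
  unfolding rv_def by auto

lemma Inr_rv: "1 \<le> i \<Longrightarrow> i \<le> d \<Longrightarrow> Inr i = rv (int d) (int i - 1)"
  unfolding rv_def by simp

lemma Inr_rv_succ: "1 \<le> i \<Longrightarrow> i \<le> d \<Longrightarrow> Inr (i mod d + 1) = rv (int d) (int i)"
  unfolding rv_def by (simp add: zmod_int[symmetric])

lemma wheel_edge_cases:
  assumes "e \<in> wheel_edges d s"
  shows "(\<exists>q. 0 \<le> q \<and> q < int d \<and> e = {rv (int d) q, rv (int d) (q+1)}) \<or>
         (\<exists>a v. 1 \<le> a \<and> a \<le> s \<and> 0 \<le> v \<and> v < int d \<and> e = {Inl a, rv (int d) v})"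
  using assms unfolding wheel_edges_def wheel_spokes_def wheel_rim_edges_def
proof (elim UnE CollectE exE conjE)
  fix a i assume h: "e = {Inl a, Inr i}" "a \<in> {1..s}" "i \<in> {1..d}"
  then show ?thesis using Inr_rv[of i d] by (intro disjI2 exI[of _ a] exI[of _ "int i - 1"]) auto
next
  fix i assume h: "e = {Inr i, Inr (i mod d + 1)}" "i \<in> {1..d}"
  then show ?thesis using Inr_rv[of i d] Inr_rv_succ[of i d]
    by (intro disjI1 exI[of _ "int i - 1"]) auto
qed

lemma rim_adj:
  assumes "{rv (int d) u, rv (int d) w} \<in> wheel_edges d s" "d \<ge> 2"
  shows "int d dvd (w - u - 1) \<or> int d dvd (u - w - 1)"
  using wheel_edge_cases[OF assms(1)]
proof (elim disjE exE conjE)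
  fix q assume "{rv (int d) u, rv (int d) w} = {rv (int d) q, rv (int d) (q + 1)}"
  then have "(rv (int d) u = rv (int d) q \<and> rv (int d) w = rv (int d) (q+1)) \<or> (rv (int d) u = rv (int d) (q+1) \<and> rv (int d) w = rv (int d) q)"
    by (auto simp: doubleton_eq_iff)
  then show ?thesis
  proof
    assume "rv (int d) u = rv (int d) q \<and> rv (int d) w = rv (int d) (q+1)"
    then have "int d dvd (u - q)" "int d dvd (w - (q+1))" using assms(2) by (auto simp: rv_eq_dvd)
    then have "int d dvd (w - (q+1)) - (u - q)" by (rule dvd_diff[rotated])
    then show ?thesis by (auto simp: algebra_simps)
  next
    assume "rv (int d) u = rv (int d) (q+1) \<and> rv (int d) w = rv (int d) q"
    then have "int d dvd (u - (q+1))" "int d dvd (w - q)" using assms(2) by (auto simp: rv_eq_dvd)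
    then have "int d dvd (u - (q+1)) - (w - q)" by (rule dvd_diff)
    then show ?thesis by (auto simp: algebra_simps)
  qed
next
  fix a v assume "{rv (int d) u, rv (int d) w} = {Inl a, rv (int d) v}"
  then show ?thesis by (auto simp: doubleton_eq_iff)
qed

definition J :: "int \<Rightarrow> int \<Rightarrow> int \<Rightarrow> int \<Rightarrow> int set" where
  "J n \<sigma> c M = {p. 0 \<le> p \<and> p < n \<and> (\<sigma> * (c - p)) mod n < M}"

lemma J_finite: "finite (J n \<sigma> c M)"
  by (rule finite_subset[of _ "{0..<n}"]) (auto simp: J_def)

lemma J_mono: "M \<le> M' \<Longrightarrow> J n \<sigma> c M \<subseteq> J n \<sigma> c M'"
  by (auto simp: J_def)

lemma sigma_sq: "\<sigma> = 1 \<or> \<sigma> = -1 \<Longrightarrow> \<sigma> * \<sigma> = (1::int)"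
  by auto

lemma J_card:
  assumes "n > 0" "\<sigma> = 1 \<or> \<sigma> = -1" "0 \<le> M"
  shows "card (J n \<sigma> c M) \<le> nat M"
proof -
  have "J n \<sigma> c M \<subseteq> (\<lambda>x. (c - \<sigma> * x) mod n) ` {0..<M}"
  proof
    fix p assume p: "p \<in> J n \<sigma> c M"
    define x where "x = (\<sigma> * (c - p)) mod n"
    have x: "0 \<le> x" "x < M" using p assms by (auto simp: J_def x_def)
    have "n dvd (\<sigma> * (c - p)) - x" unfolding x_def by (simp add: mod_0_imp_dvd minus_mod_eq_mult_div[symmetric])
    then have "n dvd \<sigma> * ((\<sigma> * (c - p)) - x)" by simp
    also have "\<sigma> * ((\<sigma> * (c - p)) - x) = (\<sigma> * \<sigma>) * (c - p) - \<sigma> * x" by (simp add: algebra_simps)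
    also have "\<dots> = (c - \<sigma> * x) - p" using sigma_sq[OF assms(2)] by simp
    finally have "(c - \<sigma> * x) mod n = p mod n" by (simp add: mod_eq_dvd_iff)
    also have "\<dots> = p" using p by (simp add: J_def)
    finally show "p \<in> (\<lambda>x. (c - \<sigma> * x) mod n) ` {0..<M}" using x by force
  qed
  then have "card (J n \<sigma> c M) \<le> card ((\<lambda>x. (c - \<sigma> * x) mod n) ` {0..<M})"
    by (rule card_mono[rotated]) simp
  also have "\<dots> \<le> card {0..<M}" by (rule card_image_le) simp
  finally show ?thesis by simp
qed




lemma card_IE3:
  assumes "finite A" "finite B" "finite C"
  shows "card ((A \<inter> B) \<union> (A \<inter> C) \<union> (B \<inter> C)) + card (A \<union> B \<union> C) \<le> card A + card B + card C"
proof -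
  have 1: "card (A \<union> B) + card (A \<inter> B) = card A + card B" using card_Un_Int[OF assms(1) assms(2)] by linarith
  have fAB: "finite (A \<union> B)" using assms by simp
  have 2: "card (A \<union> B \<union> C) + card ((A \<union> B) \<inter> C) = card (A \<union> B) + card C" using card_Un_Int[OF fAB assms(3)] by linarith
  have eq: "(A \<inter> B) \<union> (A \<inter> C) \<union> (B \<inter> C) = (A \<inter> B) \<union> ((A \<union> B) \<inter> C)" by blast
  have 3: "card ((A \<inter> B) \<union> ((A \<union> B) \<inter> C)) \<le> card (A \<inter> B) + card ((A \<union> B) \<inter> C)"
    by (rule card_Un_le)
  show ?thesis unfolding eq using 1 2 3 by linarith
qed

lemma dvd_sigma: "\<sigma> = 1 \<or> \<sigma> = -1 \<Longrightarrow> (n::int) dvd \<sigma> * x \<longleftrightarrow> n dvd x"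
  by auto

lemma mid_int: "(x::int) \<in> {u-M+1..u} \<Longrightarrow> x \<in> {v-M+1..v} \<Longrightarrow> min u v \<le> m \<Longrightarrow> m \<le> max u v \<Longrightarrow> x \<in> {m-M+1..m}"
  by (auto simp: min_def max_def split: if_splits)

lemma F1:
  assumes n: "n > 0" and M: "0 \<le> M" "2 * M \<le> n" and sg: "\<sigma> = 1 \<or> \<sigma> = -1"
  shows "card ((J n \<sigma> c1 M \<inter> J n \<sigma> c2 M) \<union> (J n \<sigma> c1 M \<inter> J n \<sigma> c3 M) \<union> (J n \<sigma> c2 M \<inter> J n \<sigma> c3 M)) \<le> nat M"
    (is "card ?D \<le> _")
proof (cases "J n \<sigma> c1 M \<union> J n \<sigma> c2 M \<union> J n \<sigma> c3 M = {0..<n}")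
  case True
  have "card ?D + card {0..<n} \<le> card (J n \<sigma> c1 M) + card (J n \<sigma> c2 M) + card (J n \<sigma> c3 M)"
    using card_IE3[OF J_finite J_finite J_finite] True by metis
  moreover have "card (J n \<sigma> c1 M) \<le> nat M" "card (J n \<sigma> c2 M) \<le> nat M" "card (J n \<sigma> c3 M) \<le> nat M"
    using J_card n sg M by auto
  ultimately show ?thesis using M by simp
next
  case False
  have "J n \<sigma> c1 M \<union> J n \<sigma> c2 M \<union> J n \<sigma> c3 M \<subseteq> {0..<n}" by (auto simp: J_def)
  with False obtain z where "z \<in> {0..<n}" "z \<notin> J n \<sigma> c1 M \<union> J n \<sigma> c2 M \<union> J n \<sigma> c3 M"
    by blast
  then have z: "0 \<le> z" "z < n" "z \<notin> J n \<sigma> c1 M" "z \<notin> J n \<sigma> c2 M" "z \<notin> J n \<sigma> c3 M"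
    by auto
  define lam where "lam p = (\<sigma> * (p - z)) mod n" for p
  define b where "b c = (\<sigma> * (c - z)) mod n" for c
  have key: "lam p \<in> {b c - M + 1 .. b c}" if "z \<notin> J n \<sigma> c M" "p \<in> J n \<sigma> c M" for c p
  proof -
    define x where "x = (\<sigma> * (c - p)) mod n"
    have x: "0 \<le> x" "x < M" using that n by (auto simp: J_def x_def)
    have bc: "M \<le> b c" "b c < n" using that(1) z n by (auto simp: J_def b_def)
    have "n dvd (\<sigma> * (c - z) - b c)" "n dvd (\<sigma> * (c - p) - x)"
      unfolding b_def x_def by (simp_all add: mod_0_imp_dvd minus_mod_eq_mult_div[symmetric])
    then have "n dvd (\<sigma> * (c - z) - b c) - (\<sigma> * (c - p) - x)" by (rule dvd_diff)
    also have "(\<sigma> * (c - z) - b c) - (\<sigma> * (c - p) - x) = \<sigma> * (p - z) - (b c - x)"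
      by (simp add: algebra_simps)
    finally have "(\<sigma> * (p - z)) mod n = (b c - x) mod n" by (simp add: mod_eq_dvd_iff)
    also have "\<dots> = b c - x" using x bc by simp
    finally show ?thesis using x unfolding lam_def by auto
  qed
  define m where "m = max (min (b c1) (b c2)) (min (max (b c1) (b c2)) (b c3))"
  have med: "min u v \<le> m \<and> m \<le> max u v" if "u \<in> {b c1, b c2, b c3}" "v \<in> {b c1, b c2, b c3}" "u \<noteq> v \<or> True"
     "(u = b c1 \<and> v = b c2) \<or> (u = b c1 \<and> v = b c3) \<or> (u = b c2 \<and> v = b c3)" for u v
    using that(4) unfolding m_def by linarith
  have sub: "?D \<subseteq> {p. 0 \<le> p \<and> p < n \<and> lam p \<in> {m - M + 1 .. m}}"
  proof
    fix p assume "p \<in> ?D"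
    then consider "p \<in> J n \<sigma> c1 M" "p \<in> J n \<sigma> c2 M" | "p \<in> J n \<sigma> c1 M" "p \<in> J n \<sigma> c3 M"
      | "p \<in> J n \<sigma> c2 M" "p \<in> J n \<sigma> c3 M" by blast
    then show "p \<in> {p. 0 \<le> p \<and> p < n \<and> lam p \<in> {m - M + 1 .. m}}"
    proof cases
      case 1
      have "0 \<le> p \<and> p < n" using 1(1) by (simp add: J_def)
      moreover have "lam p \<in> {m - M + 1 .. m}"
        using mid_int[OF key[OF z(3) 1(1)] key[OF z(4) 1(2)]] med[of "b c1" "b c2"] by simp
      ultimately show ?thesis by simp
    next
      case 2
      have "0 \<le> p \<and> p < n" using 2(1) by (simp add: J_def)
      moreover have "lam p \<in> {m - M + 1 .. m}"
        using mid_int[OF key[OF z(3) 2(1)] key[OF z(5) 2(2)]] med[of "b c1" "b c3"] by simp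
      ultimately show ?thesis by simp
    next
      case 3
      have "0 \<le> p \<and> p < n" using 3(1) by (simp add: J_def)
      moreover have "lam p \<in> {m - M + 1 .. m}"
        using mid_int[OF key[OF z(4) 3(1)] key[OF z(5) 3(2)]] med[of "b c2" "b c3"] by simp
      ultimately show ?thesis by simp
    qed
  qed
  have inj: "inj_on lam {p. 0 \<le> p \<and> p < n \<and> lam p \<in> {m - M + 1 .. m}}"
  proof (rule inj_onI)
    fix p p' assume h: "p \<in> {p. 0 \<le> p \<and> p < n \<and> lam p \<in> {m - M + 1 .. m}}"
      "p' \<in> {p. 0 \<le> p \<and> p < n \<and> lam p \<in> {m - M + 1 .. m}}" "lam p = lam p'"
    then have "n dvd \<sigma> * (p - z) - \<sigma> * (p' - z)" unfolding lam_def by (simp add: mod_eq_dvd_iff)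
    also have "\<sigma> * (p - z) - \<sigma> * (p' - z) = \<sigma> * (p - p')" by (simp add: algebra_simps)
    finally have "n dvd (p - p')" using dvd_sigma[OF sg] by simp
    then have "p mod n = p' mod n" by (simp add: mod_eq_dvd_iff)
    then show "p = p'" using h by simp
  qed
  have "card ?D \<le> card {p. 0 \<le> p \<and> p < n \<and> lam p \<in> {m - M + 1 .. m}}"
    by (rule card_mono[OF _ sub]) (rule finite_subset[of _ "{0..<n}"], auto)
  also have "\<dots> \<le> card {m - M + 1 .. m}"
    by (rule card_inj_on_le[OF inj]) auto
  finally show ?thesis by simp
qed

lemma dvd_mod_sub: "(n::int) dvd a - a mod n"
  by (simp add: minus_mod_eq_mult_div)

lemma modeq: "(n::int) dvd a - b \<Longrightarrow> a mod n = b mod n"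
  by (simp add: mod_eq_dvd_iff)

lemma F2:
  assumes n: "n > 0" and L: "1 \<le> L" "2 * L \<le> n" and sg: "\<sigma> = 1 \<or> \<sigma> = -1"
    and ne: "c1 mod n \<noteq> c2 mod n"
  shows "card (J n \<sigma> c1 L \<inter> J n \<sigma> c2 L) \<le> nat L - 1"
proof -
  define p0 where "p0 = c1 mod n"
  define p1 where "p1 = (c1 - \<sigma> * (L - 1)) mod n"
  have s2: "\<sigma> * \<sigma> = 1" using sigma_sq[OF sg] .
  have "n dvd \<sigma> * (c1 - p0)" unfolding p0_def using dvd_mod_sub by (rule dvd_mult)
  then have "(\<sigma> * (c1 - p0)) mod n = 0" by simp
  then have p0J: "p0 \<in> J n \<sigma> c1 L" using n L unfolding J_def p0_def by simp
  have "n dvd (\<sigma> * (c1 - p1) - (L - 1))"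
  proof -
    have "n dvd \<sigma> * ((c1 - \<sigma> * (L - 1)) - p1)" unfolding p1_def using dvd_mod_sub by (rule dvd_mult)
    also have "\<sigma> * ((c1 - \<sigma> * (L - 1)) - p1) = \<sigma> * (c1 - p1) - (\<sigma> * \<sigma>) * (L - 1)" by (simp add: algebra_simps)
    finally show ?thesis using s2 by simp
  qed
  then have "(\<sigma> * (c1 - p1)) mod n = (L - 1) mod n" by (rule modeq)
  then have p1J: "p1 \<in> J n \<sigma> c1 L" using n L unfolding J_def p1_def by simp
  have not_both: "\<not> (p0 \<in> J n \<sigma> c2 L \<and> p1 \<in> J n \<sigma> c2 L)"
  proof
    assume h: "p0 \<in> J n \<sigma> c2 L \<and> p1 \<in> J n \<sigma> c2 L"
    define y where "y = (\<sigma> * (c2 - c1)) mod n"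
    have "n dvd \<sigma> * (c1 - p0)" unfolding p0_def using dvd_mod_sub by (rule dvd_mult)
    then have "n dvd \<sigma> * (c2 - p0) - \<sigma> * (c2 - c1)" by (simp add: algebra_simps)
    then have "(\<sigma> * (c2 - p0)) mod n = y" unfolding y_def by (rule modeq)
    with h have y: "y < L" "0 \<le> y" using n by (auto simp: J_def y_def)
    have "y \<noteq> 0"
    proof
      assume "y = 0"
      then have "n dvd \<sigma> * (c2 - c1)" unfolding y_def by auto
      then have "n dvd c2 - c1" using dvd_sigma[OF sg] by simp
      then have "c2 mod n = c1 mod n" by (rule modeq)
      then show False using ne by simp
    qed
    have "n dvd \<sigma> * ((c1 - \<sigma> * (L - 1)) - p1)" unfolding p1_def using dvd_mod_sub by (rule dvd_mult)
    moreover have "n dvd \<sigma> * (c2 - c1) - y" unfolding y_def using dvd_mod_sub by simp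
    ultimately have "n dvd \<sigma> * ((c1 - \<sigma> * (L - 1)) - p1) + (\<sigma> * (c2 - c1) - y)" by (rule dvd_add)
    also have "\<sigma> * ((c1 - \<sigma> * (L - 1)) - p1) + (\<sigma> * (c2 - c1) - y) = \<sigma> * (c2 - p1) - (\<sigma> * \<sigma>) * (L - 1) - y"
      by (simp add: algebra_simps)
    finally have "n dvd \<sigma> * (c2 - p1) - (y + (L - 1))" using s2 by (simp add: algebra_simps)
    then have "(\<sigma> * (c2 - p1)) mod n = (y + (L - 1)) mod n" by (rule modeq)
    also have "\<dots> = y + (L - 1)" using y L by simp
    finally have "(\<sigma> * (c2 - p1)) mod n = y + (L - 1)" .
    then show False using h y \<open>y \<noteq> 0\<close> by (auto simp: J_def)
  qed
  obtain x where x: "x \<in> J n \<sigma> c1 L" "x \<notin> J n \<sigma> c2 L" using not_both p0J p1J by blast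
  have "J n \<sigma> c1 L \<inter> J n \<sigma> c2 L \<subseteq> J n \<sigma> c1 L - {x}" using x by blast
  then have "card (J n \<sigma> c1 L \<inter> J n \<sigma> c2 L) \<le> card (J n \<sigma> c1 L - {x})"
    by (rule card_mono[rotated]) (simp add: J_finite)
  also have "\<dots> = card (J n \<sigma> c1 L) - 1" using x J_finite by simp
  also have "\<dots> \<le> nat L - 1" using J_card[OF n sg] L by (simp add: diff_le_mono)
  finally show ?thesis .
qed




definition goodE :: "(nat \<Rightarrow> 'e \<Rightarrow> int set) \<Rightarrow> int \<Rightarrow> int \<Rightarrow> nat \<Rightarrow> nat \<Rightarrow> ('e \<Rightarrow> bool) \<Rightarrow> ('e \<Rightarrow> int) \<Rightarrow> ('e \<Rightarrow> nat) \<Rightarrow> 'e \<Rightarrow> bool" where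
  "goodE P n \<sigma> L s isr cc hb e \<longleftrightarrow>
     (isr e \<longrightarrow> (\<forall>a. P a e \<subseteq> J n \<sigma> (cc e) (int L))) \<and>
     (\<not> isr e \<longrightarrow> (\<forall>a. a \<noteq> hb e \<longrightarrow> P a e = {}) \<and> (\<forall>a. P a e \<subseteq> J n \<sigma> (cc e) (int L + 1)) \<and> hb e \<in> {1..s})"

definition DD :: "(nat \<Rightarrow> 'e \<Rightarrow> int set) \<Rightarrow> 'e \<Rightarrow> 'e \<Rightarrow> 'e \<Rightarrow> nat \<Rightarrow> int set" where
  "DD P e1 e2 e3 a = (P a e1 \<inter> P a e2) \<union> (P a e1 \<inter> P a e3) \<union> (P a e2 \<inter> P a e3)"

lemma DD_perm: "DD P e1 e2 e3 = DD P e2 e1 e3" "DD P e1 e2 e3 = DD P e1 e3 e2"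
  unfolding DD_def by (auto intro!: ext)

lemma goodE_sub: "goodE P n \<sigma> L s isr cc hb e \<Longrightarrow> \<exists>M. P a e \<subseteq> J n \<sigma> (cc e) M \<and> M \<le> int L + 1"
  unfolding goodE_def using J_mono[of "int L" "int L + 1"] by (cases "isr e") fastforce+

lemma goodE_sub1: "goodE P n \<sigma> L s isr cc hb e \<Longrightarrow> P a e \<subseteq> J n \<sigma> (cc e) (int L + 1)"
  unfolding goodE_def using J_mono[of "int L" "int L + 1"] by (cases "isr e") fastforce+

lemma goodE_fin: "goodE P n \<sigma> L s isr cc hb e \<Longrightarrow> finite (P a e)"
  using goodE_sub1 J_finite finite_subset by metis

lemma goodE_cardL1: "goodE P n \<sigma> L s isr cc hb e \<Longrightarrow> n > 0 \<Longrightarrow> \<sigma> = 1 \<or> \<sigma> = -1 \<Longrightarrow> card (P a e) \<le> L + 1"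
proof -
  assume g: "goodE P n \<sigma> L s isr cc hb e" and n: "n > 0" and sg: "\<sigma> = 1 \<or> \<sigma> = -1"
  have "card (P a e) \<le> card (J n \<sigma> (cc e) (int L + 1))"
    by (rule card_mono[OF J_finite goodE_sub1[OF g]])
  also have "\<dots> \<le> nat (int L + 1)" by (rule J_card[OF n sg]) simp
  finally show ?thesis by simp
qed

lemma goodE_rim_card: "goodE P n \<sigma> L s isr cc hb e \<Longrightarrow> isr e \<Longrightarrow> n > 0 \<Longrightarrow> \<sigma> = 1 \<or> \<sigma> = -1 \<Longrightarrow> card (P a e) \<le> L"
  unfolding goodE_def using J_card[of n \<sigma> "int L" "cc e"] J_finite card_mono
  by (metis le_trans nat_int of_nat_0_le_iff)

lemma DD_F1:
  assumes g: "goodE P n \<sigma> L s isr cc hb e1" "goodE P n \<sigma> L s isr cc hb e2" "goodE P n \<sigma> L s isr cc hb e3"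
    and n: "n > 0" "2 * (int L + 1) \<le> n" and sg: "\<sigma> = 1 \<or> \<sigma> = -1"
  shows "card (DD P e1 e2 e3 a) \<le> L + 1"
proof -
  have "DD P e1 e2 e3 a \<subseteq> (J n \<sigma> (cc e1) (int L + 1) \<inter> J n \<sigma> (cc e2) (int L + 1)) \<union>
       (J n \<sigma> (cc e1) (int L + 1) \<inter> J n \<sigma> (cc e3) (int L + 1)) \<union> (J n \<sigma> (cc e2) (int L + 1) \<inter> J n \<sigma> (cc e3) (int L + 1))"
    unfolding DD_def using goodE_sub1[OF g(1), of a] goodE_sub1[OF g(2), of a] goodE_sub1[OF g(3), of a] by blast
  then have "card (DD P e1 e2 e3 a) \<le> card ((J n \<sigma> (cc e1) (int L + 1) \<inter> J n \<sigma> (cc e2) (int L + 1)) \<union>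
       (J n \<sigma> (cc e1) (int L + 1) \<inter> J n \<sigma> (cc e3) (int L + 1)) \<union> (J n \<sigma> (cc e2) (int L + 1) \<inter> J n \<sigma> (cc e3) (int L + 1)))"
    by (rule card_mono[rotated]) (simp add: J_finite)
  also have "\<dots> \<le> nat (int L + 1)" by (rule F1) (use n sg in auto)
  finally show ?thesis by simp
qed

lemma DD_fin: "goodE P n \<sigma> L s isr cc hb e1 \<Longrightarrow> goodE P n \<sigma> L s isr cc hb e2 \<Longrightarrow> finite (DD P e1 e2 e3 a)"
  unfolding DD_def using goodE_fin[of P n \<sigma> L s isr cc hb e1 a] goodE_fin[of P n \<sigma> L s isr cc hb e2 a] by auto

lemma sum_single: "finite A \<Longrightarrow> (\<And>a. a \<in> A \<Longrightarrow> a \<noteq> b \<Longrightarrow> f a = (0::nat)) \<Longrightarrow> sum f A \<le> f b"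
proof (cases "b \<in> A")
  case True
  assume "finite A" "\<And>a. a \<in> A \<Longrightarrow> a \<noteq> b \<Longrightarrow> f a = 0"
  then show ?thesis using True by (simp add: sum.remove)
next
  case False
  assume "finite A" "\<And>a. a \<in> A \<Longrightarrow> a \<noteq> b \<Longrightarrow> f a = 0"
  then have "sum f A = 0" using False by (intro sum.neutral) auto
  then show ?thesis by simp
qed

lemma arith1: "(s::nat) \<ge> 1 \<Longrightarrow> L \<ge> 1 \<Longrightarrow> (s - 1) * (L - 1) + (L + 1) \<le> max (s * L) (L + 1)"
proof -
  assume "s \<ge> 1" "L \<ge> 1"
  then obtain s' L' where "s = Suc s'" "L = Suc L'" by (metis Suc_le_D One_nat_def)
  then show ?thesis by (cases s') (auto simp: algebra_simps)
qed




lemma count_spoke_a: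
  assumes g: "goodE P n \<sigma> L s isr cc hb e1" "goodE P n \<sigma> L s isr cc hb e2" "goodE P n \<sigma> L s isr cc hb e3"
    and n: "n > 0" "2 * (int L + 1) \<le> n" and sg: "\<sigma> = 1 \<or> \<sigma> = -1" and L: "L \<ge> 1" and s: "s \<ge> 1"
    and r1: "\<not> isr e1" and r2: "isr e2" and r3: "\<not> isr e3"
  shows "(\<Sum>a\<in>{1..s}. card (DD P e1 e2 e3 a)) \<le> max (s * L) (L + 1)"
proof -
  define a0 where "a0 = hb e1"
  define a1 where "a1 = hb e3"
  have a0: "a0 \<in> {1..s}" and e1z: "\<And>a. a \<noteq> a0 \<Longrightarrow> P a e1 = {}" using g(1) r1 unfolding goodE_def a0_def by auto
  have a1: "a1 \<in> {1..s}" and e3z: "\<And>a. a \<noteq> a1 \<Longrightarrow> P a e3 = {}" using g(3) r3 unfolding goodE_def a1_def by auto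
  have split: "(\<Sum>a\<in>{1..s}. card (DD P e1 e2 e3 a)) = card (DD P e1 e2 e3 a0) + (\<Sum>a\<in>{1..s}-{a0}. card (DD P e1 e2 e3 a))"
    using a0 by (simp add: sum.remove)
  show ?thesis
  proof (cases "a1 = a0")
    case True
    have "(\<Sum>a\<in>{1..s}-{a0}. card (DD P e1 e2 e3 a)) = 0"
      using e1z e3z True by (intro sum.neutral) (auto simp: DD_def)
    moreover have "card (DD P e1 e2 e3 a0) \<le> L + 1" by (rule DD_F1[OF g n sg])
    ultimately show ?thesis using split by simp
  next
    case False
    have "(\<Sum>a\<in>{1..s}-{a0}. card (DD P e1 e2 e3 a)) \<le> card (DD P e1 e2 e3 a1)"
      using e1z e3z by (intro sum_single) (auto simp: DD_def)
    also have "DD P e1 e2 e3 a1 \<subseteq> P a1 e2" using e1z False by (auto simp: DD_def)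
    then have "card (DD P e1 e2 e3 a1) \<le> card (P a1 e2)" by (rule card_mono[OF goodE_fin[OF g(2)]])
    also have "\<dots> \<le> L" by (rule goodE_rim_card[OF g(2) r2 n(1) sg])
    finally have 1: "(\<Sum>a\<in>{1..s}-{a0}. card (DD P e1 e2 e3 a)) \<le> L" .
    have "DD P e1 e2 e3 a0 \<subseteq> P a0 e2" using e3z False by (auto simp: DD_def)
    then have "card (DD P e1 e2 e3 a0) \<le> card (P a0 e2)" by (rule card_mono[OF goodE_fin[OF g(2)]])
    also have "\<dots> \<le> L" by (rule goodE_rim_card[OF g(2) r2 n(1) sg])
    finally have 2: "card (DD P e1 e2 e3 a0) \<le> L" .
    have "s \<ge> 2" using a0 a1 False by auto
    then have 3: "2 * L \<le> s * L" by (rule mult_right_mono) simp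
    have "(\<Sum>a\<in>{1..s}. card (DD P e1 e2 e3 a)) \<le> 2 * L" using 1 2 split by linarith
    also have "\<dots> \<le> max (s * L) (L + 1)" using 3 by (simp only: max.coboundedI1)
    finally show ?thesis .
  qed
qed

lemma count_spoke_b:
  assumes g: "goodE P n \<sigma> L s isr cc hb e1" "goodE P n \<sigma> L s isr cc hb e2" "goodE P n \<sigma> L s isr cc hb e3"
    and n: "n > 0" "2 * (int L + 1) \<le> n" and sg: "\<sigma> = 1 \<or> \<sigma> = -1" and L: "L \<ge> 1" and s: "s \<ge> 1"
    and r1: "\<not> isr e1" and r2: "\<not> isr e2" and r3: "\<not> isr e3"
  shows "(\<Sum>a\<in>{1..s}. card (DD P e1 e2 e3 a)) \<le> max (s * L) (L + 1)"
proof -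
  define a0 where "a0 = hb e1"
  define a1 where "a1 = hb e2"
  define a2 where "a2 = hb e3"
  have a0: "a0 \<in> {1..s}" and e1z: "\<And>a. a \<noteq> a0 \<Longrightarrow> P a e1 = {}" using g(1) r1 unfolding goodE_def a0_def by auto
  have a1: "a1 \<in> {1..s}" and e2z: "\<And>a. a \<noteq> a1 \<Longrightarrow> P a e2 = {}" using g(2) r2 unfolding goodE_def a1_def by auto
  have a2: "a2 \<in> {1..s}" and e3z: "\<And>a. a \<noteq> a2 \<Longrightarrow> P a e3 = {}" using g(3) r3 unfolding goodE_def a2_def by auto
  have split: "(\<Sum>a\<in>{1..s}. card (DD P e1 e2 e3 a)) = card (DD P e1 e2 e3 a0) + (\<Sum>a\<in>{1..s}-{a0}. card (DD P e1 e2 e3 a))"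
    using a0 by (simp add: sum.remove)
  show ?thesis
  proof (cases "a1 = a2 \<and> a1 \<noteq> a0")
    case True
    have "DD P e1 e2 e3 a0 = {}" using e2z e3z True by (auto simp: DD_def)
    moreover have "(\<Sum>a\<in>{1..s}-{a0}. card (DD P e1 e2 e3 a)) \<le> card (DD P e1 e2 e3 a1)"
      using e1z e2z by (intro sum_single) (auto simp: DD_def)
    moreover have "card (DD P e1 e2 e3 a1) \<le> L + 1" by (rule DD_F1[OF g n sg])
    ultimately show ?thesis using split by simp
  next
    case False
    have "DD P e1 e2 e3 x = {}" if "x \<noteq> a0" for x
    proof -
      have "P x e2 = {} \<or> P x e3 = {}" using False that e2z e3z by metis
      then show ?thesis using e1z[OF that] by (auto simp: DD_def)
    qed
    then have "(\<Sum>a\<in>{1..s}-{a0}. card (DD P e1 e2 e3 a)) = 0"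
      by (intro sum.neutral) auto
    moreover have "card (DD P e1 e2 e3 a0) \<le> L + 1" by (rule DD_F1[OF g n sg])
    ultimately show ?thesis using split by simp
  qed
qed

lemma count_spoke_c:
  assumes g: "goodE P n \<sigma> L s isr cc hb e1" "goodE P n \<sigma> L s isr cc hb e2" "goodE P n \<sigma> L s isr cc hb e3"
    and n: "n > 0" "2 * (int L + 1) \<le> n" and sg: "\<sigma> = 1 \<or> \<sigma> = -1" and L: "L \<ge> 1" and s: "s \<ge> 1"
    and r1: "\<not> isr e1" and r2: "isr e2" and r3: "isr e3" and ne: "cc e2 mod n \<noteq> cc e3 mod n"
  shows "(\<Sum>a\<in>{1..s}. card (DD P e1 e2 e3 a)) \<le> max (s * L) (L + 1)"
proof -
  define a0 where "a0 = hb e1"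
  have a0: "a0 \<in> {1..s}" and e1z: "\<And>a. a \<noteq> a0 \<Longrightarrow> P a e1 = {}" using g(1) r1 unfolding goodE_def a0_def by auto
  have split: "(\<Sum>a\<in>{1..s}. card (DD P e1 e2 e3 a)) = card (DD P e1 e2 e3 a0) + (\<Sum>a\<in>{1..s}-{a0}. card (DD P e1 e2 e3 a))"
    using a0 by (simp add: sum.remove)
  have "card (DD P e1 e2 e3 a) \<le> L - 1" if "a \<noteq> a0" for a
  proof -
    have "DD P e1 e2 e3 a \<subseteq> J n \<sigma> (cc e2) (int L) \<inter> J n \<sigma> (cc e3) (int L)"
      using e1z[OF that] g(2,3) r2 r3 unfolding DD_def goodE_def by blast
    then have "card (DD P e1 e2 e3 a) \<le> card (J n \<sigma> (cc e2) (int L) \<inter> J n \<sigma> (cc e3) (int L))"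
      by (rule card_mono[rotated]) (simp add: J_finite)
    also have "\<dots> \<le> nat (int L) - 1" by (rule F2) (use n sg L ne in auto)
    finally show ?thesis by simp
  qed
  then have "(\<Sum>a\<in>{1..s}-{a0}. card (DD P e1 e2 e3 a)) \<le> of_nat (card ({1..s}-{a0})) * (L - 1)"
    by (intro sum_bounded_above) auto
  also have "of_nat (card ({1..s}-{a0})) = s - 1" using a0 by simp
  finally have 1: "(\<Sum>a\<in>{1..s}-{a0}. card (DD P e1 e2 e3 a)) \<le> (s - 1) * (L - 1)" .
  have 2: "card (DD P e1 e2 e3 a0) \<le> L + 1" by (rule DD_F1[OF g n sg])
  show ?thesis using split 1 2 arith1[OF s L] by linarith
qed

lemma count_all_rim:
  assumes g: "goodE P n \<sigma> L s isr cc hb e1" "goodE P n \<sigma> L s isr cc hb e2" "goodE P n \<sigma> L s isr cc hb e3"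
    and n: "n > 0" "2 * (int L + 1) \<le> n" and sg: "\<sigma> = 1 \<or> \<sigma> = -1"
    and r1: "isr e1" and r2: "isr e2" and r3: "isr e3"
  shows "(\<Sum>a\<in>{1..s}. card (DD P e1 e2 e3 a)) \<le> max (s * L) (L + 1)"
proof -
  have "card (DD P e1 e2 e3 a) \<le> L" for a
  proof -
    have "DD P e1 e2 e3 a \<subseteq> (J n \<sigma> (cc e1) (int L) \<inter> J n \<sigma> (cc e2) (int L)) \<union>
       (J n \<sigma> (cc e1) (int L) \<inter> J n \<sigma> (cc e3) (int L)) \<union> (J n \<sigma> (cc e2) (int L) \<inter> J n \<sigma> (cc e3) (int L))"
      using g r1 r2 r3 unfolding DD_def goodE_def by blast
    then have "card (DD P e1 e2 e3 a) \<le> card ((J n \<sigma> (cc e1) (int L) \<inter> J n \<sigma> (cc e2) (int L)) \<union>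
       (J n \<sigma> (cc e1) (int L) \<inter> J n \<sigma> (cc e3) (int L)) \<union> (J n \<sigma> (cc e2) (int L) \<inter> J n \<sigma> (cc e3) (int L)))"
      by (rule card_mono[rotated]) (simp add: J_finite)
    also have "\<dots> \<le> nat (int L)" by (rule F1) (use n sg in auto)
    finally show ?thesis by simp
  qed
  then have "(\<Sum>a\<in>{1..s}. card (DD P e1 e2 e3 a)) \<le> of_nat (card {1..s}) * L"
    by (intro sum_bounded_above) auto
  then show ?thesis by simp
qed

lemma count_abstract:
  assumes g: "goodE P n \<sigma> L s isr cc hb e1" "goodE P n \<sigma> L s isr cc hb e2" "goodE P n \<sigma> L s isr cc hb e3"
    and n: "n > 0" "2 * (int L + 1) \<le> n" and sg: "\<sigma> = 1 \<or> \<sigma> = -1" and L: "L \<ge> 1" and s: "s \<ge> 1"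
    and ne: "\<And>e f. e \<in> {e1,e2,e3} \<Longrightarrow> f \<in> {e1,e2,e3} \<Longrightarrow> e \<noteq> f \<Longrightarrow> isr e \<Longrightarrow> isr f \<Longrightarrow> cc e mod n \<noteq> cc f mod n"
    and d: "e1 \<noteq> e2" "e1 \<noteq> e3" "e2 \<noteq> e3"
  shows "(\<Sum>a\<in>{1..s}. card (DD P e1 e2 e3 a)) \<le> max (s * L) (L + 1)"
proof -
  have gen: "(\<Sum>a\<in>{1..s}. card (DD P x y z a)) \<le> max (s * L) (L + 1)"
    if gg: "goodE P n \<sigma> L s isr cc hb x" "goodE P n \<sigma> L s isr cc hb y" "goodE P n \<sigma> L s isr cc hb z"
      and nx: "\<not> isr x" and nyz: "isr y \<Longrightarrow> isr z \<Longrightarrow> cc y mod n \<noteq> cc z mod n" for x y z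
  proof (cases "isr y")
    case True
    show ?thesis
    proof (cases "isr z")
      case True
      show ?thesis by (rule count_spoke_c[OF gg n sg L s nx \<open>isr y\<close> True nyz[OF \<open>isr y\<close> True]])
    next
      case False
      show ?thesis by (rule count_spoke_a[OF gg n sg L s nx \<open>isr y\<close> False])
    qed
  next
    case False
    show ?thesis
    proof (cases "isr z")
      case True
      have "(\<Sum>a\<in>{1..s}. card (DD P x z y a)) \<le> max (s * L) (L + 1)"
        by (rule count_spoke_a[OF gg(1,3,2) n sg L s nx True False])
      then show ?thesis by (simp add: DD_perm(2)[of P x y z])
    next
      case False
      show ?thesis by (rule count_spoke_b[OF gg n sg L s nx \<open>\<not> isr y\<close> False])
    qed
  qed
  consider "isr e1" "isr e2" "isr e3" | "\<not> isr e1" | "\<not> isr e2" | "\<not> isr e3" by blast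
  then show ?thesis
  proof cases
    case 1
    then show ?thesis by (rule count_all_rim[OF g n sg])
  next
    case 2
    then show ?thesis by (rule gen[OF g]) (use ne d in auto)
  next
    case 3
    have "(\<Sum>a\<in>{1..s}. card (DD P e2 e1 e3 a)) \<le> max (s * L) (L + 1)"
      by (rule gen[OF g(2,1,3) 3]) (use ne d in auto)
    then show ?thesis by (simp add: DD_perm(1)[of P e1 e2 e3])
  next
    case 4
    have "(\<Sum>a\<in>{1..s}. card (DD P e3 e1 e2 a)) \<le> max (s * L) (L + 1)"
      by (rule gen[OF g(3,1,2) 4]) (use ne d in auto)
    moreover have "DD P e3 e1 e2 = DD P e1 e2 e3" unfolding DD_def by (auto intro!: ext)
    ultimately show ?thesis by simp
  qed
qed




definition cE :: "int \<Rightarrow> nat \<Rightarrow> nat \<Rightarrow> int \<Rightarrow> int \<Rightarrow> int set \<Rightarrow> (nat + nat) set set" where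
  "cE n t a p \<sigma> S = ((\<lambda>x. {rv n (p + \<sigma> * x), rv n (p + \<sigma> * (x + 1))}) ` {0..<int t - 2})
      \<union> ((\<lambda>x. {Inl a, rv n (p + \<sigma> * x)}) ` S)"

definition cV :: "int \<Rightarrow> nat \<Rightarrow> nat \<Rightarrow> int \<Rightarrow> int \<Rightarrow> (nat + nat) set" where
  "cV n t a p \<sigma> = insert (Inl a) ((\<lambda>x. rv n (p + \<sigma> * x)) ` {0..int t - 2})"

lemma dvd_small: "(n::int) \<ge> 3 \<Longrightarrow> n dvd 2 \<Longrightarrow> False"
  using zdvd_imp_le[of n 2] by simp

lemma mem_rim:
  assumes n: "n \<ge> 3" "int t - 2 \<le> n" and sg: "\<sigma> = 1 \<or> \<sigma> = -1"
    and m: "{rv n q, rv n (q+1)} \<in> cE n t a p \<sigma> S"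
  shows "(\<sigma> * ((if \<sigma> = 1 then q else q + 1) - p)) mod n < int t - 2"
proof -
  from m obtain x where x: "0 \<le> x" "x < int t - 2" and eq: "{rv n q, rv n (q+1)} = {rv n (p + \<sigma> * x), rv n (p + \<sigma> * (x + 1))}"
    unfolding cE_def by (auto simp: doubleton_eq_iff)
  have n0: "n > 0" using n by simp
  from eq consider "rv n q = rv n (p + \<sigma> * x)" "rv n (q+1) = rv n (p + \<sigma> * (x + 1))"
    | "rv n q = rv n (p + \<sigma> * (x + 1))" "rv n (q+1) = rv n (p + \<sigma> * x)"
    by (auto simp: doubleton_eq_iff)
  then show ?thesis
  proof cases
    case 1
    then have h: "n dvd q - (p + \<sigma> * x)" "n dvd (q + 1) - (p + \<sigma> * (x + 1))" using n0 by (auto simp: rv_eq_dvd)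
    have "\<sigma> = 1"
    proof (rule ccontr)
      assume "\<sigma> \<noteq> 1"
      then have "\<sigma> = -1" using sg by simp
      have "n dvd ((q + 1) - (p + \<sigma> * (x + 1))) - (q - (p + \<sigma> * x))" by (rule dvd_diff[OF h(2) h(1)])
      then have "n dvd 2" using \<open>\<sigma> = -1\<close> by (simp add: algebra_simps)
      then show False using dvd_small n by blast
    qed
    then have "n dvd (q - p) - x" using h by (simp add: algebra_simps)
    then have "(q - p) mod n = x mod n" by (rule modeq)
    then show ?thesis using \<open>\<sigma> = 1\<close> x n by simp
  next
    case 2
    then have h: "n dvd q - (p + \<sigma> * (x + 1))" "n dvd (q + 1) - (p + \<sigma> * x)" using n0 by (auto simp: rv_eq_dvd)
    have "\<sigma> = -1"
    proof (rule ccontr)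
      assume "\<sigma> \<noteq> -1"
      then have "\<sigma> = 1" using sg by simp
      have "n dvd ((q + 1) - (p + \<sigma> * x)) - (q - (p + \<sigma> * (x + 1)))" by (rule dvd_diff[OF h(2) h(1)])
      then have "n dvd 2" using \<open>\<sigma> = 1\<close> by (simp add: algebra_simps)
      then show False using dvd_small n by blast
    qed
    then have "n dvd (-1) * ((q + 1) - (p + \<sigma> * x))" using h by (simp only: dvd_mult)
    then have "n dvd (- ((q + 1) - p)) - x" using \<open>\<sigma> = -1\<close> by (simp add: algebra_simps)
    then have "(- ((q + 1) - p)) mod n = x mod n" by (rule modeq)
    then show ?thesis using \<open>\<sigma> = -1\<close> x n by simp
  qed
qed

lemma mem_spoke:
  assumes n: "n \<ge> 3" "int t - 2 < n" and sg: "\<sigma> = 1 \<or> \<sigma> = -1" and S: "S \<subseteq> {0..int t - 2}"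
    and m: "{Inl a', rv n v} \<in> cE n t a p \<sigma> S"
  shows "a' = a \<and> (\<sigma> * (v - p)) mod n < int t - 1"
proof -
  from m obtain x where x: "x \<in> S" and eq: "{Inl a', rv n v} = {Inl a, rv n (p + \<sigma> * x)}"
    unfolding cE_def by (auto simp: doubleton_eq_iff)
  have n0: "n > 0" using n by simp
  from eq have "a' = a" "rv n v = rv n (p + \<sigma> * x)" by (auto simp: doubleton_eq_iff)
  then have "n dvd v - (p + \<sigma> * x)" using n0 by (simp add: rv_eq_dvd)
  then have "n dvd \<sigma> * (v - (p + \<sigma> * x))" by simp
  also have "\<sigma> * (v - (p + \<sigma> * x)) = \<sigma> * (v - p) - (\<sigma> * \<sigma>) * x" by (simp add: algebra_simps)
  also have "\<dots> = \<sigma> * (v - p) - x" using sigma_sq[OF sg] by simp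
  finally have "(\<sigma> * (v - p)) mod n = x mod n" by (rule modeq)
  moreover have "0 \<le> x" "x \<le> int t - 2" using x S by auto
  ultimately show ?thesis using \<open>a' = a\<close> n by simp
qed




lemma two_of_three:
  assumes "e1 \<noteq> e2" "e1 \<noteq> e3" "e2 \<noteq> e3"
  shows "2 \<le> card ({e1,e2,e3} \<inter> E) \<longleftrightarrow> (e1 \<in> E \<and> e2 \<in> E) \<or> (e1 \<in> E \<and> e3 \<in> E) \<or> (e2 \<in> E \<and> e3 \<in> E)"
  using assms by (cases "e1 \<in> E"; cases "e2 \<in> E"; cases "e3 \<in> E") (auto simp: card_insert_if Int_insert_left)

lemma count_sigma:
  assumes s: "s \<ge> 1" and t: "t \<ge> 4" and d: "d \<ge> 3 * t - 5" and sg: "\<sigma> = 1 \<or> \<sigma> = -1"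
    and S: "S \<subseteq> {0..int t - 2}" and T: "T \<subseteq> wheel_edges d s" "card T = 3"
  shows "card {(a, p). a \<in> {1..s} \<and> 0 \<le> p \<and> p < int d \<and> 2 \<le> card (T \<inter> cE (int d) t a p \<sigma> S)}
         \<le> max (s * (t - 2)) (t - 1)"
proof -
  define n where "n = int d"
  have n3: "n \<ge> 3" and nt: "int t - 2 < n" and n2: "2 * (int (t - 2) + 1) \<le> n" using d t unfolding n_def by auto
  have n0: "n > 0" using n3 by simp
  obtain e1 e2 e3 where Te: "T = {e1, e2, e3}" and dist: "e1 \<noteq> e2" "e2 \<noteq> e3" "e1 \<noteq> e3"
    using T(2) by (auto simp: card_3_iff)
  define isr where "isr e = (\<exists>q. 0 \<le> q \<and> q < n \<and> e = {rv n q, rv n (q+1)})" for e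
  define qq where "qq e = (SOME q. 0 \<le> q \<and> q < n \<and> e = {rv n q, rv n (q+1)})" for e
  define av where "av e = (SOME av. 1 \<le> fst av \<and> fst av \<le> s \<and> 0 \<le> snd av \<and> snd av < n \<and> e = {Inl (fst av), rv n (snd av)})" for e
  define cc where "cc e = (if isr e then (if \<sigma> = 1 then qq e else qq e + 1) else snd (av e))" for e
  define hb where "hb e = fst (av e)" for e
  define P where "P a e = {p. 0 \<le> p \<and> p < n \<and> e \<in> cE n t a p \<sigma> S}" for a e
  have qq: "0 \<le> qq e \<and> qq e < n \<and> e = {rv n (qq e), rv n (qq e + 1)}" if "isr e" for e
    using someI_ex[OF that[unfolded isr_def]] unfolding qq_def .
  have av: "1 \<le> hb e \<and> hb e \<le> s \<and> 0 \<le> snd (av e) \<and> snd (av e) < n \<and> e = {Inl (hb e), rv n (snd (av e))}"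
    if "e \<in> wheel_edges d s" "\<not> isr e" for e
  proof -
    have "\<exists>a v. 1 \<le> a \<and> a \<le> s \<and> 0 \<le> v \<and> v < n \<and> e = {Inl a, rv n v}"
      using wheel_edge_cases[OF that(1)] that(2) unfolding isr_def n_def by blast
    then have "\<exists>av. 1 \<le> fst av \<and> fst av \<le> s \<and> 0 \<le> snd av \<and> snd av < n \<and> e = {Inl (fst av), rv n (snd av)}"
      by auto
    from someI_ex[OF this] show ?thesis unfolding av_def[symmetric] hb_def by blast
  qed
  have good: "goodE P n \<sigma> (t - 2) s isr cc hb e" if "e \<in> wheel_edges d s" for e
  proof (cases "isr e")
    case True
    have "P a e \<subseteq> J n \<sigma> (cc e) (int (t - 2))" for a
    proof
      fix p assume "p \<in> P a e"
      then have p: "0 \<le> p" "p < n" "{rv n (qq e), rv n (qq e + 1)} \<in> cE n t a p \<sigma> S"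
        using qq[OF True] unfolding P_def by auto
      have "(\<sigma> * (cc e - p)) mod n < int t - 2"
        using mem_rim[OF n3 _ sg p(3)] nt True unfolding cc_def by simp
      then show "p \<in> J n \<sigma> (cc e) (int (t - 2))" using p t unfolding J_def by simp
    qed
    then show ?thesis using True unfolding goodE_def by blast
  next
    case False
    note a = av[OF that False]
    have hh: "a = hb e \<and> p \<in> J n \<sigma> (cc e) (int (t - 2) + 1)" if "p \<in> P a e" for a p
    proof -
      have p: "0 \<le> p" "p < n" "{Inl (hb e), rv n (snd (av e))} \<in> cE n t a p \<sigma> S"
        using that a unfolding P_def by auto
      have "hb e = a \<and> (\<sigma> * (snd (av e) - p)) mod n < int t - 1"
        by (rule mem_spoke[OF n3 nt sg S p(3)])
      then show ?thesis using p t False unfolding J_def cc_def by auto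
    qed
    have 1: "\<forall>a. a \<noteq> hb e \<longrightarrow> P a e = {}" using hh by blast
    have 2: "\<forall>a. P a e \<subseteq> J n \<sigma> (cc e) (int (t - 2) + 1)" using hh by blast
    have 3: "hb e \<in> {1..s}" using a by simp
    show ?thesis using False 1 2 3 unfolding goodE_def by blast
  qed
  have ne: "cc e mod n \<noteq> cc f mod n" if "e \<noteq> f" "isr e" "isr f" for e f
  proof
    assume h: "cc e mod n = cc f mod n"
    have "qq e mod n = qq f mod n"
    proof (cases "\<sigma> = 1")
      case True
      then show ?thesis using h that unfolding cc_def by simp
    next
      case False
      then have "(qq e + 1) mod n = (qq f + 1) mod n" using h that unfolding cc_def by simp
      then have "n dvd (qq e + 1) - (qq f + 1)" by (simp add: mod_eq_dvd_iff)
      then have "n dvd qq e - qq f" by simp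
      then show ?thesis by (rule modeq)
    qed
    then have "qq e = qq f" using qq[OF that(2)] qq[OF that(3)] by simp
    then have "e = f" using qq[OF that(2)] qq[OF that(3)] by metis
    then show False using that(1) by simp
  qed
  have eT: "e1 \<in> wheel_edges d s" "e2 \<in> wheel_edges d s" "e3 \<in> wheel_edges d s" using T(1) Te by auto
  have set_eq: "{(a, p). a \<in> {1..s} \<and> 0 \<le> p \<and> p < int d \<and> 2 \<le> card (T \<inter> cE (int d) t a p \<sigma> S)}
      = Sigma {1..s} (DD P e1 e2 e3)"
    unfolding Te two_of_three[OF dist(1) dist(3) dist(2)] DD_def P_def n_def by auto
  have "card (Sigma {1..s} (DD P e1 e2 e3)) = (\<Sum>a\<in>{1..s}. card (DD P e1 e2 e3 a))"
    by (rule card_SigmaI) (auto intro: DD_fin good eT)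
  also have "\<dots> \<le> max (s * (t - 2)) (t - 2 + 1)"
    by (rule count_abstract[OF good[OF eT(1)] good[OF eT(2)] good[OF eT(3)] n0 n2 sg _ s])
       (use t ne dist in auto)
  also have "t - 2 + 1 = t - 1" using t by simp
  finally show ?thesis unfolding set_eq .
qed




definition Aset :: "nat \<Rightarrow> nat set \<Rightarrow> int set" where
  "Aset t I = {0, int t - 2} \<union> ((\<lambda>i. int i - 2) ` I)"

definition refl_set :: "nat \<Rightarrow> int set \<Rightarrow> int set" where
  "refl_set t S = (\<lambda>x. int t - 2 - x) ` S"

lemma sym_mem:
  assumes sym: "theta_symmetric t I" and fin: "finite I" and i: "i \<in> I"
  shows "t + 2 - i \<in> I \<and> i \<le> t + 2"
proof -
  define xs where "xs = sorted_list_of_set I"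
  define l where "l = length xs"
  have setxs: "set xs = I" using fin unfolding xs_def by simp
  have H: "l = 0 \<or> (\<forall>j. 1 \<le> j \<and> 2 * j \<le> l + 1 \<longrightarrow> xs ! (j - 1) + xs ! (l - j) = t + 2)"
    using sym unfolding theta_symmetric_def Let_def xs_def l_def by simp
  from i setxs obtain m where m: "m < l" "xs ! m = i" unfolding l_def by (metis in_set_conv_nth)
  then have l0: "l \<noteq> 0" by simp
  have H2: "xs ! (j - 1) + xs ! (l - j) = t + 2" if "1 \<le> j" "2 * j \<le> l + 1" for j
    using H l0 that by blast
  have mem: "xs ! q \<in> I" if "q < l" for q using that setxs unfolding l_def by (metis nth_mem)
  show ?thesis
  proof (cases "2 * (m + 1) \<le> l + 1")
    case True
    have "xs ! (m + 1 - 1) + xs ! (l - (m + 1)) = t + 2" by (rule H2) (use True in auto)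
    then have e: "xs ! m + xs ! (l - (m + 1)) = t + 2" by simp
    then have "t + 2 - i = xs ! (l - (m + 1))" "i \<le> t + 2" using m(2) by linarith+
    moreover have "xs ! (l - (m + 1)) \<in> I" by (rule mem) (use m in auto)
    ultimately show ?thesis by simp
  next
    case False
    have "xs ! (l - m - 1) + xs ! (l - (l - m)) = t + 2" by (rule H2) (use False m in auto)
    moreover have "l - (l - m) = m" using m by simp
    ultimately have e: "xs ! (l - m - 1) + xs ! m = t + 2" by simp
    then have "t + 2 - i = xs ! (l - m - 1)" "i \<le> t + 2" using m(2) by linarith+
    moreover have "xs ! (l - m - 1) \<in> I" by (rule mem) (use m in auto)
    ultimately show ?thesis by simp
  qed
qed

lemma sym_refl:
  assumes sym: "theta_symmetric t I" and fin: "finite I" and I: "I \<subseteq> {3..<t}"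
  shows "refl_set t (Aset t I) = Aset t I"
proof -
  have 1: "refl_set t (Aset t I) \<subseteq> Aset t I"
    if sym: "theta_symmetric t I" and fin: "finite I" and I: "I \<subseteq> {3..<t}" for I
  proof
    fix y assume "y \<in> refl_set t (Aset t I)"
    then obtain x where x: "x \<in> Aset t I" "y = int t - 2 - x" unfolding refl_set_def by auto
    from x(1) consider "x = 0" | "x = int t - 2" | i where "i \<in> I" "x = int i - 2" unfolding Aset_def by auto
    then show "y \<in> Aset t I"
    proof cases
      case 3
      have "t + 2 - i \<in> I" "i \<le> t + 2" using sym_mem[OF sym fin 3(1)] by auto
      moreover have "y = int (t + 2 - i) - 2" using 3 x(2) \<open>i \<le> t + 2\<close> by simp
      ultimately show ?thesis unfolding Aset_def by blast
    qed (use x in \<open>auto simp: Aset_def\<close>)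
  qed
  have "Aset t I = refl_set t (refl_set t (Aset t I))" unfolding refl_set_def image_image by simp
  also have "\<dots> \<subseteq> refl_set t (Aset t I)" unfolding refl_set_def by (rule image_mono, fold refl_set_def, rule 1[OF sym fin I])
  finally show ?thesis using 1[OF sym fin I] by blast
qed

lemma Aset_sub: "I \<subseteq> {3..<t} \<Longrightarrow> t \<ge> 2 \<Longrightarrow> Aset t I \<subseteq> {0..int t - 2}"
  unfolding Aset_def by auto

lemma image_reindex:
  assumes "\<And>x. x \<in> A \<Longrightarrow> G x = F (g x)" "g ` A = A"
  shows "G ` A = F ` A"
proof -
  have "G ` A = (\<lambda>x. F (g x)) ` A" using assms(1) by (rule image_cong[OF refl])
  also have "\<dots> = F ` (g ` A)" by (simp add: image_image)
  finally show ?thesis using assms(2) by simp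
qed

lemma rv_shift: "rv n (p mod n + y) = rv n (p + y)"
  unfolding rv_def by (simp add: mod_add_left_eq)

lemma cE_mod: "cE n t a (p mod n) \<sigma> S = cE n t a p \<sigma> S"
  unfolding cE_def by (simp add: rv_shift)

lemma cV_mod: "cV n t a (p mod n) \<sigma> = cV n t a p \<sigma>"
  unfolding cV_def by (simp add: rv_shift)

lemma cE_refl:
  assumes t: "t \<ge> 2"
  shows "cE n t a (p + \<sigma> * (int t - 2)) (-\<sigma>) S = cE n t a p \<sigma> (refl_set t S)"
proof -
  have A: "(\<lambda>x. {rv n (p + \<sigma> * (int t - 2) + - \<sigma> * x), rv n (p + \<sigma> * (int t - 2) + - \<sigma> * (x + 1))}) ` {0..<int t - 2}
      = (\<lambda>x. {rv n (p + \<sigma> * x), rv n (p + \<sigma> * (x + 1))}) ` {0..<int t - 2}"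
  proof (rule image_reindex[where g = "\<lambda>x. int t - 3 - x"])
    fix x show "{rv n (p + \<sigma> * (int t - 2) + - \<sigma> * x), rv n (p + \<sigma> * (int t - 2) + - \<sigma> * (x + 1))}
       = {rv n (p + \<sigma> * (int t - 3 - x)), rv n (p + \<sigma> * (int t - 3 - x + 1))}"
      by (simp add: algebra_simps insert_commute)
  next
    show "(\<lambda>x. int t - 3 - x) ` {0..<int t - 2} = {0..<int t - 2}"
    proof
      show "(\<lambda>x. int t - 3 - x) ` {0..<int t - 2} \<subseteq> {0..<int t - 2}" by auto
      show "{0..<int t - 2} \<subseteq> (\<lambda>x. int t - 3 - x) ` {0..<int t - 2}"
      proof
        fix y assume "y \<in> {0..<int t - 2}"
        then show "y \<in> (\<lambda>x. int t - 3 - x) ` {0..<int t - 2}" by (intro image_eqI[of _ _ "int t - 3 - y"]) auto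
      qed
    qed
  qed
  have B: "(\<lambda>x. {Inl a, rv n (p + \<sigma> * (int t - 2) + - \<sigma> * x)}) ` S = (\<lambda>x. {Inl a, rv n (p + \<sigma> * x)}) ` refl_set t S"
    unfolding refl_set_def image_image by (simp add: algebra_simps)
  show ?thesis unfolding cE_def using A B by simp
qed

lemma cV_refl:
  assumes t: "t \<ge> 2"
  shows "cV n t a (p + \<sigma> * (int t - 2)) (-\<sigma>) = cV n t a p \<sigma>"
proof -
  have "(\<lambda>x. rv n (p + \<sigma> * (int t - 2) + - \<sigma> * x)) ` {0..int t - 2} = (\<lambda>x. rv n (p + \<sigma> * x)) ` {0..int t - 2}"
  proof (rule image_reindex[where g = "\<lambda>x. int t - 2 - x"])
    fix x show "rv n (p + \<sigma> * (int t - 2) + - \<sigma> * x) = rv n (p + \<sigma> * (int t - 2 - x))"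
      by (simp add: algebra_simps)
  next
    show "(\<lambda>x. int t - 2 - x) ` {0..int t - 2} = {0..int t - 2}"
    proof
      show "(\<lambda>x. int t - 2 - x) ` {0..int t - 2} \<subseteq> {0..int t - 2}" by auto
      show "{0..int t - 2} \<subseteq> (\<lambda>x. int t - 2 - x) ` {0..int t - 2}"
      proof
        fix y assume "y \<in> {0..int t - 2}"
        then show "y \<in> (\<lambda>x. int t - 2 - x) ` {0..int t - 2}" by (intro image_eqI[of _ _ "int t - 2 - y"]) auto
      qed
    qed
  qed
  then show ?thesis unfolding cV_def by simp
qed




lemma small_dvd: "(n::int) dvd m \<Longrightarrow> \<bar>m\<bar> < n \<Longrightarrow> m = 0"
  using dvd_imp_le_int[of m n] by force

lemma dvd_comb_add: "(n::int) dvd a \<Longrightarrow> n dvd b \<Longrightarrow> c = a + b \<Longrightarrow> n dvd c"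
  by simp

lemma dvd_comb_diff: "(n::int) dvd a \<Longrightarrow> n dvd b \<Longrightarrow> c = a - b \<Longrightarrow> n dvd c"
  by simp

lemma mod_cancel_nat:
  assumes "(a + i) mod t = (a + j) mod (t::nat)" "i < t" "j < t"
  shows "i = j"
proof -
  have "int ((a + i) mod t) = int ((a + j) mod t)" using assms(1) by simp
  then have "(int a + int i) mod int t = (int a + int j) mod int t" by (simp add: zmod_int)
  then have "int t dvd (int a + int i) - (int a + int j)" by (simp add: mod_eq_dvd_iff)
  then have "int t dvd (int i - int j)" by simp
  moreover have "\<bar>int i - int j\<bar> < int t" using assms(2,3) by simp
  ultimately have "int i - int j = 0" by (rule small_dvd)
  then show ?thesis by simp
qed

lemma xi_facts:
  fixes k t :: nat
  assumes k: "1 \<le> k" "k \<le> t"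
  defines "xi \<equiv> \<lambda>j. (k - 1 + j) mod t + 1"
  shows xi_range: "xi j \<in> {1..t}"
    and xi_succ: "xi (j + 1) = xi j mod t + 1"
    and xi_0: "xi 0 = k"
    and xi_t: "xi t = k"
    and xi_inj: "i < t \<Longrightarrow> j < t \<Longrightarrow> xi i = xi j \<Longrightarrow> i = j"
    and xi_surj: "x \<in> {1..t} \<Longrightarrow> xi ((x + t - k) mod t) = x"
proof -
  have t0: "t > 0" using k by simp
  show "xi j \<in> {1..t}" unfolding xi_def using t0 by (simp add: Suc_leI)
  show "xi (j + 1) = xi j mod t + 1" unfolding xi_def
    by (simp add: mod_Suc_eq)
  show "xi 0 = k" unfolding xi_def using k by simp
  have "(k - 1 + t) mod t = (k - 1) mod t" by (rule mod_add_self2)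
  then show "xi t = k" unfolding xi_def using k by simp
  show "i < t \<Longrightarrow> j < t \<Longrightarrow> xi i = xi j \<Longrightarrow> i = j" unfolding xi_def
    using mod_cancel_nat[of "k - 1" i t j] by simp
  assume x: "x \<in> {1..t}"
  have "(k - 1 + (x + t - k) mod t) mod t = (k - 1 + (x + t - k)) mod t" by (simp add: mod_add_right_eq)
  also have "k - 1 + (x + t - k) = (x - 1) + t" using k x by auto
  also have "((x - 1) + t) mod t = (x - 1) mod t" by (rule mod_add_self2)
  also have "\<dots> = x - 1" using x by (intro mod_less) auto
  finally show "xi ((x + t - k) mod t) = x" unfolding xi_def using x by simp
qed




lemma cE_Un: "cE n t a p \<sigma> (X \<union> Y) = cE n t a p \<sigma> X \<union> (\<lambda>x. {Inl a, rv n (p + \<sigma> * x)}) ` Y"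
  unfolding cE_def by auto

lemma img_shift1: "t \<ge> 1 \<Longrightarrow> (\<lambda>j::nat. int j - 1) ` {1..<t} = {0..int t - 2}"
proof
  assume "t \<ge> 1"
  show "(\<lambda>j::nat. int j - 1) ` {1..<t} \<subseteq> {0..int t - 2}" by auto
  show "{0..int t - 2} \<subseteq> (\<lambda>j::nat. int j - 1) ` {1..<t}"
  proof
    fix x assume "x \<in> {0..int t - 2}"
    then show "x \<in> (\<lambda>j::nat. int j - 1) ` {1..<t}" by (intro image_eqI[of _ _ "nat (x + 1)"]) auto
  qed
qed

lemma img_shift2: "t \<ge> 2 \<Longrightarrow> (\<lambda>j::nat. int j - 1) ` {1..<t - 1} = {0..<int t - 2}"
proof
  assume "t \<ge> 2"
  then show "(\<lambda>j::nat. int j - 1) ` {1..<t - 1} \<subseteq> {0..<int t - 2}" by auto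
  show "{0..<int t - 2} \<subseteq> (\<lambda>j::nat. int j - 1) ` {1..<t - 1}"
  proof
    fix x assume "x \<in> {0..<int t - 2}"
    then show "x \<in> (\<lambda>j::nat. int j - 1) ` {1..<t - 1}" by (intro image_eqI[of _ _ "nat (x + 1)"]) auto
  qed
qed

lemma theta_edge_form:
  assumes I: "I \<subseteq> {3..<t}" and e: "e \<in> theta_edges t I"
  shows "\<exists>x y. x \<in> {1..t} \<and> y \<in> {1..t} \<and> e = {x, y}"
proof -
  from e consider i where "i \<in> {1..t}" "e = {i, i mod t + 1}" | i where "i \<in> I" "e = {1, i}"
    unfolding theta_edges_def by blast
  then show ?thesis
  proof cases
    case 1
    then have "i mod t + 1 \<in> {1..t}" by (simp add: Suc_leI)
    then show ?thesis using 1 by blast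
  next
    case 2
    then have "i \<in> {1..t}" "(1::nat) \<in> {1..t}" using I by auto
    then show ?thesis using 2 by blast
  qed
qed

lemma theta_edges_img: "theta_edges t I = (\<lambda>i. {i, i mod t + 1}) ` {1..t} \<union> (\<lambda>i. {1, i}) ` I"
  unfolding theta_edges_def by auto

lemma char:
  assumes t: "t \<ge> 4" and d: "d \<ge> 3 * t - 5" and I: "I \<subseteq> {3..<t}"
    and sub: "is_subgraph (wheel_verts d s) (wheel_edges d s) VH EH"
    and iso: "graph_iso (theta_verts t) (theta_edges t I) VH EH"
    and one: "card (VH \<inter> wheel_hubs s) = 1"
  shows "\<exists>a p \<sigma>. a \<in> {1..s} \<and> (\<sigma> = 1 \<or> \<sigma> = -1) \<and> VH = cV (int d) t a p \<sigma> \<and> EH = cE (int d) t a p \<sigma> (Aset t I)"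
proof -
  define n where "n = int d"
  have nt: "n \<ge> int t + 2" using t d unfolding n_def by auto
  have d2: "d \<ge> 2" using t d by auto
  obtain f where bij: "bij_betw f {1..t} VH"
    and isoP: "\<And>x y. x \<in> {1..t} \<Longrightarrow> y \<in> {1..t} \<Longrightarrow> {x, y} \<in> theta_edges t I \<longleftrightarrow> {f x, f y} \<in> EH"
    using iso unfolding graph_iso_def theta_verts_def by blast
  have VHw: "VH \<subseteq> wheel_verts d s" and EHw: "EH \<subseteq> wheel_edges d s" and EHV: "\<And>e. e \<in> EH \<Longrightarrow> e \<subseteq> VH"
    using sub unfolding is_subgraph_def by auto
  have inj: "inj_on f {1..t}" and VHf: "VH = f ` {1..t}" using bij by (auto simp: bij_betw_def)
  obtain h where h: "VH \<inter> wheel_hubs s = {h}" using one by (rule card_1_singletonE)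
  then have "h \<in> wheel_hubs s" by blast
  then obtain a where a: "a \<in> {1..s}" "h = Inl a" unfolding wheel_hubs_def by auto
  have "Inl a \<in> VH" using h a by auto
  then obtain k where k: "k \<in> {1..t}" "f k = Inl a" using VHf by auto
  have rimv: "\<exists>r. 0 \<le> r \<and> r < n \<and> f x = rv n r" if x: "x \<in> {1..t}" "x \<noteq> k" for x
  proof -
    have fx: "f x \<in> VH" using x VHf by auto
    have "f x \<noteq> Inl a" using inj x k by (metis inj_on_def)
    then have "f x \<notin> wheel_hubs s" using fx h a by auto
    then have "f x \<in> wheel_rim d" using fx VHw unfolding wheel_verts_def by auto
    then obtain i where i: "i \<in> {1..d}" "f x = Inr i" unfolding wheel_rim_def by auto
    then have "f x = rv n (int i - 1)" using Inr_rv[of i d] unfolding n_def by simp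
    then show ?thesis using i unfolding n_def by (intro exI[of _ "int i - 1"]) auto
  qed
  define \<rho> where "\<rho> x = (SOME r. 0 \<le> r \<and> r < n \<and> f x = rv n r)" for x
  have \<rho>: "0 \<le> \<rho> x \<and> \<rho> x < n \<and> f x = rv n (\<rho> x)" if "x \<in> {1..t}" "x \<noteq> k" for x
    using someI_ex[OF rimv[OF that]] unfolding \<rho>_def .
  define xi where "xi j = (k - 1 + j) mod t + 1" for j
  have k1: "1 \<le> k" "k \<le> t" using k by auto
  note xf = xi_facts[OF k1, folded xi_def]
  define F where "F j = f (xi j)" for j
  define g where "g j = \<rho> (xi j)" for j
  have F0: "F 0 = Inl a" "F t = Inl a" unfolding F_def using xf k by auto
  have xik: "xi j \<noteq> k" if "1 \<le> j" "j < t" for j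
  proof
    assume "xi j = k"
    then have "xi j = xi 0" using xf by simp
    then have "j = 0" using xf(5)[of j 0] that by simp
    then show False using that by simp
  qed
  have Fg: "F j = rv n (g j)" if "1 \<le> j" "j < t" for j
    using \<rho>[OF xf(1) xik[OF that]] unfolding F_def g_def by simp
  have Finj: "F i = F j \<Longrightarrow> i < t \<Longrightarrow> j < t \<Longrightarrow> i = j" for i j
    using inj xf(1)[of i] xf(1)[of j] xf(5)[of i j] unfolding F_def inj_on_def by blast
  have adj: "n dvd g (j+1) - g j - 1 \<or> n dvd g j - g (j+1) - 1" if "1 \<le> j" "j + 1 < t" for j
  proof -
    have "{xi j, xi j mod t + 1} \<in> theta_edges t I" unfolding theta_edges_def using xf(1)[of j] by blast
    then have "{F j, F (j+1)} \<in> EH" using isoP[OF xf(1)[of j] xf(1)[of "j+1"]] xf(2)[of j] unfolding F_def by simp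
    then have "{rv (int d) (g j), rv (int d) (g (j+1))} \<in> wheel_edges d s"
      using EHw Fg[of j] Fg[of "j+1"] that unfolding n_def by auto
    from rim_adj[OF this d2] show ?thesis unfolding n_def by simp
  qed
  define \<sigma> where "\<sigma> = (if n dvd g 2 - g 1 - 1 then 1 else (-1::int))"
  have sg: "\<sigma> = 1 \<or> \<sigma> = -1" unfolding \<sigma>_def by simp
  have mono: "m + 1 \<le> t - 2 \<longrightarrow> (n dvd g (m+1) - g 1 - \<sigma> * int m) \<and> (n dvd g (m+2) - g 1 - \<sigma> * int (m+1))" for m
  proof (induction m)
    case 0
    have "n dvd g 2 - g 1 - \<sigma>"
    proof (cases "n dvd g 2 - g 1 - 1")
      case True then show ?thesis unfolding \<sigma>_def by simp
    next
      case False
      then have "n dvd g 1 - g 2 - 1" using adj[of 1] t by (simp add: numeral_2_eq_2)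
      then have "n dvd - (g 1 - g 2 - 1)" by (simp only: dvd_minus_iff)
      then show ?thesis using False unfolding \<sigma>_def by (simp add: algebra_simps)
    qed
    then show ?case by (simp add: numeral_2_eq_2)
  next
    case (Suc m)
    show ?case
    proof
      assume m: "Suc m + 1 \<le> t - 2"
      then have IH1: "n dvd g (m+1) - g 1 - \<sigma> * int m" and IH2: "n dvd g (m+2) - g 1 - \<sigma> * int (m+1)"
        using Suc by auto
      have "n dvd g (m+3) - g 1 - \<sigma> * int (m+2)"
      proof (rule ccontr)
        assume nd: "\<not> n dvd g (m+3) - g 1 - \<sigma> * int (m+2)"
        have "n dvd g (m+3) - g (m+2) + \<sigma>"
        proof -
          have A: "n dvd g (m+3) - g (m+2) - 1 \<or> n dvd g (m+2) - g (m+3) - 1" using adj[of "m+2"] m by (simp add: numeral_3_eq_3)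
          show ?thesis
          proof (cases "\<sigma> = 1")
            case True
            have "\<not> n dvd g (m+3) - g (m+2) - 1"
            proof
              assume "n dvd g (m+3) - g (m+2) - 1"
              then have "n dvd g (m+3) - g 1 - \<sigma> * int (m+2)"
                by (rule dvd_comb_add[OF _ IH2]) (simp add: True algebra_simps)
              then show False using nd by simp
            qed
            then have "n dvd g (m+2) - g (m+3) - 1" using A by simp
            then have "n dvd - (g (m+2) - g (m+3) - 1)" by (simp only: dvd_minus_iff)
            then show ?thesis using True by (simp add: algebra_simps)
          next
            case False
            then have s1: "\<sigma> = -1" using sg by simp
            have "\<not> n dvd g (m+2) - g (m+3) - 1"
            proof
              assume "n dvd g (m+2) - g (m+3) - 1"
              then have "n dvd - (g (m+2) - g (m+3) - 1)" by (simp only: dvd_minus_iff)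
              then have "n dvd g (m+3) - g 1 - \<sigma> * int (m+2)"
                by (rule dvd_comb_add[OF _ IH2]) (simp add: s1 algebra_simps)
              then show False using nd by simp
            qed
            then have "n dvd g (m+3) - g (m+2) - 1" using A by simp
            then show ?thesis using s1 by (simp add: algebra_simps)
          qed
        qed
        then have "n dvd g (m+3) - g (m+1)"
          by (rule dvd_comb_add[OF _ dvd_comb_diff[OF IH2 IH1 refl]]) (simp add: algebra_simps)
        then have "F (m+3) = F (m+1)" using Fg[of "m+3"] Fg[of "m+1"] m nt unfolding n_def
          by (simp add: rv_eq_dvd)
        then have "m + 3 = m + 1" using Finj m by simp
        then show False by simp
      qed
      then show "n dvd g (Suc m + 1) - g 1 - \<sigma> * int (Suc m) \<and> n dvd g (Suc m + 2) - g 1 - \<sigma> * int (Suc m + 1)"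
        using IH2 by (simp add: numeral_3_eq_3 algebra_simps)
    qed
  qed
  define p0 where "p0 = g 1"
  have Fpos: "F j = rv n (p0 + \<sigma> * (int j - 1))" if "1 \<le> j" "j < t" for j
  proof -
    have "n dvd g j - g 1 - \<sigma> * (int j - 1)"
    proof (cases "j + 1 < t")
      case True
      then show ?thesis using mono[of "j - 1"] that by (simp add: of_nat_diff)
    next
      case False
      then have "j = (t - 3) + 2" using that t by simp
      moreover have "(t - 3) + 1 \<le> t - 2" using t by simp
      ultimately show ?thesis using mono[of "t - 3"] t by (simp add: of_nat_diff algebra_simps)
    qed
    then have "rv n (g j) = rv n (p0 + \<sigma> * (int j - 1))" using nt unfolding p0_def
      by (simp add: rv_eq_dvd algebra_simps)
    then show ?thesis using Fg[OF that] by simp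
  qed
  have xi_img: "xi ` {0..<t} = {1..t}"
  proof
    show "xi ` {0..<t} \<subseteq> {1..t}" using xf(1) by auto
    show "{1..t} \<subseteq> xi ` {0..<t}"
    proof
      fix x assume "x \<in> {1..t}"
      then show "x \<in> xi ` {0..<t}" using xf(6)[of x] t by (intro image_eqI[of _ _ "(x + t - k) mod t"]) auto
    qed
  qed
  have t0: "{0..<t} = insert 0 {1..<t}" using t by auto
  have "VH = F ` {0..<t}" unfolding VHf F_def xi_img[symmetric] image_image ..
  also have "\<dots> = insert (Inl a) (F ` {1..<t})" using F0 t0 by simp
  also have "F ` {1..<t} = (\<lambda>j. rv n (p0 + \<sigma> * (int j - 1))) ` {1..<t}"
    by (rule image_cong) (auto simp: Fpos)
  also have "\<dots> = (\<lambda>x. rv n (p0 + \<sigma> * x)) ` ((\<lambda>j::nat. int j - 1) ` {1..<t})" by (simp add: image_image)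
  also have "\<dots> = (\<lambda>x. rv n (p0 + \<sigma> * x)) ` {0..int t - 2}" using img_shift1[of t] t by simp
  finally have VHeq: "VH = cV n t a p0 \<sigma>" unfolding cV_def .
  have EHth: "EH = (\<lambda>e. f ` e) ` theta_edges t I"
  proof
    show "EH \<subseteq> (\<lambda>e. f ` e) ` theta_edges t I"
    proof
      fix e assume e: "e \<in> EH"
      then have "e \<in> wheel_edges d s" using EHw by auto
      then obtain u w where uw: "e = {u, w}" using wheel_edge_cases by blast
      then have "u \<in> VH" "w \<in> VH" using EHV[OF e] by auto
      then obtain x y where xy: "x \<in> {1..t}" "y \<in> {1..t}" "u = f x" "w = f y" using VHf by auto
      then have "{x, y} \<in> theta_edges t I" using isoP[OF xy(1,2)] e uw by simp
      moreover have "e = f ` {x, y}" using uw xy by simp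
      ultimately show "e \<in> (\<lambda>e. f ` e) ` theta_edges t I" by blast
    qed
    show "(\<lambda>e. f ` e) ` theta_edges t I \<subseteq> EH"
    proof
      fix e' assume "e' \<in> (\<lambda>e. f ` e) ` theta_edges t I"
      then obtain e where e: "e \<in> theta_edges t I" "e' = f ` e" by auto
      then obtain x y where xy: "x \<in> {1..t}" "y \<in> {1..t}" "e = {x, y}" using theta_edge_form[OF I] by blast
      then have "{f x, f y} \<in> EH" using isoP[OF xy(1,2)] e by simp
      then show "e' \<in> EH" using e xy by simp
    qed
  qed
  define Cyc where "Cyc = (\<lambda>i. {f i, f (i mod t + 1)}) ` {1..t}"
  define Ch where "Ch = (\<lambda>i. {f 1, f i}) ` I"
  have EHsplit: "EH = Cyc \<union> Ch" unfolding EHth theta_edges_img Cyc_def Ch_def image_Un image_image by simp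
  have "Cyc = (\<lambda>j. {F j, F (j + 1)}) ` {0..<t}"
    unfolding Cyc_def xi_img[symmetric] image_image F_def xf(2) ..
  also have "{0..<t} = {0} \<union> {t - 1} \<union> {1..<t - 1}" using t by auto
  also have "(\<lambda>j. {F j, F (j + 1)}) ` ({0} \<union> {t - 1} \<union> {1..<t - 1})
      = {{F 0, F 1}, {F (t - 1), F t}} \<union> (\<lambda>j. {F j, F (j + 1)}) ` {1..<t - 1}"
    using t by auto
  also have "{F 0, F 1} = {Inl a, rv n (p0 + \<sigma> * 0)}" using F0 Fpos[of 1] t by simp
  also have "{F (t - 1), F t} = {Inl a, rv n (p0 + \<sigma> * (int t - 2))}"
    using F0 Fpos[of "t - 1"] t by (simp add: of_nat_diff insert_commute)
  also have "(\<lambda>j. {F j, F (j + 1)}) ` {1..<t - 1} = (\<lambda>j. {rv n (p0 + \<sigma> * (int j - 1)), rv n (p0 + \<sigma> * (int j - 1 + 1))}) ` {1..<t - 1}"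
    by (rule image_cong) (use Fpos t in auto)
  also have "\<dots> = (\<lambda>x. {rv n (p0 + \<sigma> * x), rv n (p0 + \<sigma> * (x + 1))}) ` ((\<lambda>j::nat. int j - 1) ` {1..<t - 1})"
    by (simp add: image_image)
  also have "\<dots> = (\<lambda>x. {rv n (p0 + \<sigma> * x), rv n (p0 + \<sigma> * (x + 1))}) ` {0..<int t - 2}"
    using img_shift2[of t] t by simp
  finally have Cyc_eq: "Cyc = cE n t a p0 \<sigma> {0, int t - 2}" unfolding cE_def by auto
  show ?thesis
  proof (cases "k = 1")
    case True
    have xi1: "xi j = j + 1" if "j < t" for j unfolding xi_def using True that by simp
    have "Ch = (\<lambda>i. {Inl a, rv n (p0 + \<sigma> * (int i - 2))}) ` I"
      unfolding Ch_def
    proof (rule image_cong[OF refl])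
      fix i assume i: "i \<in> I"
      then have i3: "3 \<le> i" "i < t" using I by auto
      have "f i = F (i - 1)" unfolding F_def using xi1[of "i - 1"] i3 by simp
      also have "\<dots> = rv n (p0 + \<sigma> * (int i - 2))" using Fpos[of "i - 1"] i3 by (simp add: of_nat_diff)
      finally show "{f 1, f i} = {Inl a, rv n (p0 + \<sigma> * (int i - 2))}" using k True by simp
    qed
    also have "\<dots> = (\<lambda>x. {Inl a, rv n (p0 + \<sigma> * x)}) ` ((\<lambda>i. int i - 2) ` I)" by (simp add: image_image)
    finally have "EH = cE n t a p0 \<sigma> (Aset t I)" unfolding EHsplit Cyc_eq Aset_def cE_Un by simp
    then show ?thesis using VHeq a sg unfolding n_def by blast
  next
    case False
    then have k2: "2 \<le> k" using k by auto
    define j1 where "j1 = t + 1 - k"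
    have j1: "1 \<le> j1" "j1 < t" "xi j1 = 1" using k2 k unfolding j1_def xi_def by auto
    have Isub: "I \<subseteq> {k}"
    proof
      fix i assume i: "i \<in> I"
      show "i \<in> {k}"
      proof (rule ccontr)
        assume ik: "i \<notin> {k}"
        have i3: "3 \<le> i" "i < t" using I i by auto
        define ji where "ji = (i + t - k) mod t"
        have ji: "xi ji = i" "ji < t" using xf(6)[of i] i3 t unfolding ji_def by auto
        have "ji \<noteq> 0"
        proof
          assume "ji = 0"
          then have "i = k" using ji(1) xf(3) by simp
          then show False using ik by simp
        qed
        then have ji1: "1 \<le> ji" by simp
        have "{1, i} \<in> theta_edges t I" using i unfolding theta_edges_def by blast
        then have "{f 1, f i} \<in> EH" using isoP[of 1 i] i3 by simp
        then have "{F j1, F ji} \<in> wheel_edges d s" using EHw j1 ji unfolding F_def by auto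
        then have "{rv (int d) (p0 + \<sigma> * (int j1 - 1)), rv (int d) (p0 + \<sigma> * (int ji - 1))} \<in> wheel_edges d s"
          using Fpos[OF j1(1,2)] Fpos[OF ji1 ji(2)] unfolding n_def by simp
        from rim_adj[OF this d2]
        have "n dvd \<sigma> * (int ji - int j1) - 1 \<or> n dvd \<sigma> * (int j1 - int ji) - 1"
          unfolding n_def by (simp add: algebra_simps)
        moreover have "\<bar>\<sigma> * (int ji - int j1) - 1\<bar> < n" "\<bar>\<sigma> * (int j1 - int ji) - 1\<bar> < n"
          using sg j1 ji nt by auto
        ultimately have "\<sigma> * (int ji - int j1) - 1 = 0 \<or> \<sigma> * (int j1 - int ji) - 1 = 0"
          using small_dvd by blast
        then have dif: "int ji - int j1 = 1 \<or> int ji - int j1 = -1" using sg by auto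
        show False
        proof (cases "k < i")
          case True
          have "i + t - k = (i - k) + t" using True by simp
          then have "ji = (i - k) mod t" unfolding ji_def by (simp only: mod_add_self2)
          also have "\<dots> = i - k" using i3 by (intro mod_less) auto
          finally have "int ji = int i - int k" using True by simp
          moreover have "int j1 = int t + 1 - int k" using k unfolding j1_def by auto
          ultimately show False using dif i3 by linarith
        next
          case False
          then have "k > i" using ik by auto
          have "ji = i + t - k" unfolding ji_def using i3 \<open>k > i\<close> by (intro mod_less) auto
          then have "int ji = int i + int t - int k" using \<open>k > i\<close> k by auto
          moreover have "int j1 = int t + 1 - int k" using k unfolding j1_def by auto
          ultimately show False using dif i3 by linarith
        qed
      qed
    qed
    show ?thesis
    proof (cases "I = {}")
      case True
      then have "EH = cE n t a p0 \<sigma> (Aset t I)" unfolding EHsplit Cyc_eq Ch_def Aset_def by simp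
      then show ?thesis using VHeq a sg unfolding n_def by blast
    next
      case False
      then have Ik: "I = {k}" using Isub by auto
      have "F j1 = rv n (p0 + \<sigma> * (int t - int k))" using Fpos[OF j1(1,2)] k unfolding j1_def by (simp add: of_nat_diff)
      then have "Ch = (\<lambda>x. {Inl a, rv n (p0 + \<sigma> * x)}) ` {int t - int k}"
        unfolding Ch_def Ik F_def using j1 k by (simp add: insert_commute)
      then have "EH = cE n t a p0 \<sigma> ({0, int t - 2} \<union> {int t - int k})" unfolding EHsplit Cyc_eq cE_Un by simp
      also have "{0, int t - 2} \<union> {int t - int k} = refl_set t (Aset t I)" unfolding refl_set_def Aset_def Ik by auto
      also have "cE n t a p0 \<sigma> (refl_set t (Aset t I)) = cE n t a (p0 + \<sigma> * (int t - 2)) (-\<sigma>) (Aset t I)"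
        using cE_refl[of t n a p0 \<sigma> "Aset t I"] t by simp
      finally have "EH = cE n t a (p0 + \<sigma> * (int t - 2)) (-\<sigma>) (Aset t I)" .
      moreover have "VH = cV n t a (p0 + \<sigma> * (int t - 2)) (-\<sigma>)" using VHeq cV_refl[of t n a p0 \<sigma>] t by simp
      moreover have "-\<sigma> = 1 \<or> -\<sigma> = -1" using sg by auto
      ultimately show ?thesis using a unfolding n_def by blast
    qed
  qed
qed




theorem lemma2p2:
  fixes d s t l :: nat and I :: "nat set" and T :: "(nat + nat) set set"
  assumes "s \<ge> 1" and "d \<ge> 3 * t - 5" and "t \<ge> 4" and "t \<ge> l + 3"
    and "I \<subseteq> {3..<t}" and "card I = l"
    and "T \<subseteq> wheel_edges d s" and "card T = 3"
  shows "card {(VH, EH). is_subgraph (wheel_verts d s) (wheel_edges d s) VH EH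
              \<and> graph_iso (theta_verts t) (theta_edges t I) VH EH
              \<and> card (VH \<inter> wheel_hubs s) = 1
              \<and> card (T \<inter> EH) \<ge> 2}
         \<le> (if theta_symmetric t I then max (s * (t - 2)) (t - 1)
             else max (2 * s * (t - 2)) (2 * (t - 1)))"
proof -
  note s = assms(1) and d = assms(2) and t = assms(3) and I = assms(5) and T = assms(7,8)
  define n where "n = int d"
  have n0: "n > 0" using d t unfolding n_def by auto
  define A where "A = Aset t I"
  have finI: "finite I" using I finite_subset by blast
  have AS: "A \<subseteq> {0..int t - 2}" unfolding A_def using Aset_sub[OF I] t by simp
  define Sg where "Sg = (if theta_symmetric t I then {1} else {1, -1::int})"
  define Q where "Q \<sigma> = {(a, p). a \<in> {1..s} \<and> 0 \<le> p \<and> p < n \<and> 2 \<le> card (T \<inter> cE n t a p \<sigma> A)}" for \<sigma>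
  define G where "G \<sigma> = (\<lambda>(a, p). (cV n t a p \<sigma>, cE n t a p \<sigma> A))" for \<sigma>
  define C where "C = {(VH, EH). is_subgraph (wheel_verts d s) (wheel_edges d s) VH EH
              \<and> graph_iso (theta_verts t) (theta_edges t I) VH EH
              \<and> card (VH \<inter> wheel_hubs s) = 1
              \<and> card (T \<inter> EH) \<ge> 2}"
  have Qfin: "finite (Q \<sigma>)" for \<sigma>
    by (rule finite_subset[of _ "{1..s} \<times> {0..<n}"]) (auto simp: Q_def)
  have Qcard: "card (Q \<sigma>) \<le> max (s * (t - 2)) (t - 1)" if "\<sigma> = 1 \<or> \<sigma> = -1" for \<sigma>
    unfolding Q_def n_def by (rule count_sigma[OF s t d that AS T])
  have sub: "C \<subseteq> (\<Union>\<sigma>\<in>Sg. G \<sigma> ` Q \<sigma>)"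
  proof
    fix x assume "x \<in> C"
    then obtain VH EH where x: "x = (VH, EH)"
      and h: "is_subgraph (wheel_verts d s) (wheel_edges d s) VH EH"
        "graph_iso (theta_verts t) (theta_edges t I) VH EH" "card (VH \<inter> wheel_hubs s) = 1"
        "card (T \<inter> EH) \<ge> 2"
      unfolding C_def by auto
    obtain a p \<sigma> where a: "a \<in> {1..s}" "\<sigma> = 1 \<or> \<sigma> = -1" "VH = cV n t a p \<sigma>" "EH = cE n t a p \<sigma> A"
      using char[OF t d I h(1-3)] unfolding n_def A_def by blast
    obtain p' \<sigma>' where b: "\<sigma>' \<in> Sg" "VH = cV n t a p' \<sigma>'" "EH = cE n t a p' \<sigma>' A"
    proof (cases "\<sigma> \<in> Sg")
      case True
      then show ?thesis using that a by blast
    next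
      case False
      then have sym: "theta_symmetric t I" and s1: "\<sigma> = -1" using a(2) unfolding Sg_def by (auto split: if_splits)
      have "cE n t a (p - (int t - 2) + 1 * (int t - 2)) (- 1) A = cE n t a (p - (int t - 2)) 1 (refl_set t A)"
        by (rule cE_refl) (use t in simp)
      also have "refl_set t A = A" unfolding A_def by (rule sym_refl[OF sym finI I])
      finally have E: "EH = cE n t a (p - (int t - 2)) 1 A" using a(4) s1 by simp
      have "cV n t a (p - (int t - 2) + 1 * (int t - 2)) (- 1) = cV n t a (p - (int t - 2)) 1"
        by (rule cV_refl) (use t in simp)
      then have V: "VH = cV n t a (p - (int t - 2)) 1" using a(3) s1 by simp
      show ?thesis by (rule that[OF _ V E]) (simp add: Sg_def)
    qed
    have sg': "\<sigma>' = 1 \<or> \<sigma>' = -1" using b(1) unfolding Sg_def by (auto split: if_splits)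
    have V: "VH = cV n t a (p' mod n) \<sigma>'" using b(2) by (simp add: cV_mod)
    have E: "EH = cE n t a (p' mod n) \<sigma>' A" using b(3) by (simp add: cE_mod)
    have "(a, p' mod n) \<in> Q \<sigma>'" unfolding Q_def using a(1) n0 h(4) E by auto
    moreover have "x = G \<sigma>' (a, p' mod n)" unfolding G_def x using V E by simp
    ultimately show "x \<in> (\<Union>\<sigma>\<in>Sg. G \<sigma> ` Q \<sigma>)" using b(1) by blast
  qed
  have finSg: "finite Sg" unfolding Sg_def by simp
  have "card C \<le> card (\<Union>\<sigma>\<in>Sg. G \<sigma> ` Q \<sigma>)"
    by (rule card_mono[OF _ sub]) (use finSg Qfin in auto)
  also have "\<dots> \<le> (\<Sum>\<sigma>\<in>Sg. card (G \<sigma> ` Q \<sigma>))" by (rule card_UN_le[OF finSg])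
  also have "\<dots> \<le> (\<Sum>\<sigma>\<in>Sg. card (Q \<sigma>))" by (rule sum_mono) (rule card_image_le[OF Qfin])
  also have "\<dots> \<le> (if theta_symmetric t I then max (s * (t - 2)) (t - 1)
             else max (2 * s * (t - 2)) (2 * (t - 1)))"
  proof (cases "theta_symmetric t I")
    case True
    then show ?thesis unfolding Sg_def using Qcard[of 1] by simp
  next
    case False
    then have "(\<Sum>\<sigma>\<in>Sg. card (Q \<sigma>)) = card (Q 1) + card (Q (-1))" unfolding Sg_def by simp
    also have "\<dots> \<le> max (s * (t - 2)) (t - 1) + max (s * (t - 2)) (t - 1)"
      using Qcard[of 1] Qcard[of "-1"] by simp
    also have "\<dots> = max (2 * s * (t - 2)) (2 * (t - 1))" by (simp add: max_def)
    finally show ?thesis using False by simp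
  qed
  finally show ?thesis unfolding C_def .
qed


end
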